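(* Let $n\ge1$, $d\ge1$, $m\ge1$ be integers and $p\in(0,1)$. For integers $d_1,d_2,k$ put $$P(n,d_1,d_2,k,p)=n^{d_2-k}\left(1-p^{d_2}-p^{d_1}+2p^{d_1+d_2-k}\right)^m.$$ Then $$\max_{d_1,d_2,k}P(n,d_1,d_2,k,p)=\max_{0\le w\le d-1}\max\{P(n,d,d,w,p),\,P(n,w,d,w,p)\}=\max_{0\le w\le d-1}\max\left\{n^{d-w}(1-2p^d+2p^{2d-w})^m,\ n^{d-w}(1+p^d-p^w)^m\right\},$$ where the maximum on the left is over all integers $d_1,d_2,k$ with $0\le d_1,d_2\le d$ and $0\le k\le\min(d_1,d_2)$, excluding the triples with $d_1=d_2=k$, and $w$ ranges over integers. *)

theory Defs
  imports Complex_Main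
begin

definition Pfun :: "nat \<Rightarrow> nat \<Rightarrow> nat \<Rightarrow> nat \<Rightarrow> nat \<Rightarrow> real \<Rightarrow> real" where
  "Pfun m n d1 d2 k p = real n ^ (d2 - k) * (1 - p ^ d2 - p ^ d1 + 2 * p ^ (d1 + d2 - k)) ^ m"

end

theory Submission
  imports Defs
begin

lemma base_nonneg:
  fixes p :: real
  assumes "0 < p" "p < 1" "k \<le> min a b"
  shows "0 \<le> 1 - p ^ b - p ^ a + 2 * p ^ (a + b - k)"
proof -
  have "p ^ (a + b) \<le> p ^ (a + b - k)"
    using assms by (intro power_decreasing) auto
  hence h: "p ^ a * p ^ b \<le> p ^ (a + b - k)" by (simp add: power_add)
  have xa: "0 \<le> p ^ a" "p ^ a \<le> 1" using assms by (auto intro: power_le_one)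
  have xb: "0 \<le> p ^ b" "p ^ b \<le> 1" using assms by (auto intro: power_le_one)
  have "0 \<le> (1 - p ^ a) * (1 - p ^ b)" using xa xb by simp
  moreover have "0 \<le> p ^ a * p ^ b" using xa xb by simp
  ultimately show ?thesis using h by (simp add: algebra_simps)
qed

lemma lin_bound:
  fixes a x y z :: real
  assumes "0 \<le> y" "y \<le> 1" "z \<le> a" "z * y \<le> x" "x \<le> a" "0 \<le> z"
  shows "1 - a * y - x + 2 * x * y \<le> 1 - 2 * (z * y) + 2 * ((z * y) * y)
       \<or> 1 - a * y - x + 2 * x * y \<le> 1 - z * y - z + 2 * (z * y)"
proof (cases "1 - 2 * y \<ge> 0")
  case True
  have "(z * y) * (1 - 2 * y) \<le> x * (1 - 2 * y)" using True assms by (intro mult_right_mono) auto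
  moreover have "z * y \<le> a * y" using assms by (intro mult_right_mono) auto
  ultimately have "1 - a * y - x + 2 * x * y \<le> 1 - 2 * (z * y) + 2 * ((z * y) * y)"
    by (simp add: algebra_simps)
  thus ?thesis by blast
next
  case False
  have "x * (2 * y - 1) \<le> a * (2 * y - 1)" using False assms by (intro mult_right_mono) auto
  moreover have "z * (1 - y) \<le> a * (1 - y)" using assms by (intro mult_right_mono) auto
  ultimately have "1 - a * y - x + 2 * x * y \<le> 1 - z * y - z + 2 * (z * y)"
    by (simp add: algebra_simps)
  thus ?thesis by blast
qed

lemma key:
  fixes n d m :: nat and p :: real
  assumes "n \<ge> 1" "d \<ge> 1" "0 < p" "p < 1"
    and c: "d1 \<le> d" "d2 \<le> d" "k \<le> min d1 d2" "\<not> (d1 = d2 \<and> d2 = k)"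
  shows "\<exists>w\<in>{0..d-1}. Pfun m n d1 d2 k p \<le> max (Pfun m n d d w p) (Pfun m n w d w p)"
proof (cases "d2 = k")
  case True
  hence dk: "k < d1" using c by auto
  have e1: "Pfun m n d1 d2 k p = (1 - p ^ k + p ^ d1) ^ m"
    using True by (simp add: Pfun_def algebra_simps)
  have dd: "d - 1 + d - (d - 1) = d" using assms by simp
  have e2: "Pfun m n (d-1) d (d-1) p = real n * (1 + p ^ d - p ^ (d - 1)) ^ m"
  proof -
    have "1 - p ^ d - p ^ (d - 1) + 2 * p ^ d = 1 + p ^ d - p ^ (d - 1)" by simp
    thus ?thesis using assms by (simp only: Pfun_def dd) simp
  qed
  have pk: "p ^ k \<le> 1" using assms by (simp add: power_le_one)
  have h1: "p ^ d1 \<le> p ^ Suc k" using assms dk by (intro power_decreasing) auto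
  have h2: "p ^ (d - 1) \<le> p ^ k" using assms dk c by (intro power_decreasing) auto
  obtain e where de: "d = Suc e" using assms by (cases d) auto
  have h3: "p ^ d = p * p ^ (d - 1)" using de by simp
    
  have h4: "(1 - p) * p ^ (d - 1) \<le> (1 - p) * p ^ k" using h2 assms by (intro mult_left_mono) auto
  have b: "1 - p ^ k + p ^ d1 \<le> 1 + p ^ d - p ^ (d - 1)"
    using h1 h3 h4 by (simp add: algebra_simps)
  have b0: "0 \<le> 1 - p ^ k + p ^ d1" using pk assms by simp
  have "(1 - p ^ k + p ^ d1) ^ m \<le> (1 + p ^ d - p ^ (d - 1)) ^ m"
    using b b0 by (rule power_mono)
  also have "\<dots> \<le> real n * (1 + p ^ d - p ^ (d - 1)) ^ m"
  proof -
    have "0 \<le> (1 + p ^ d - p ^ (d - 1)) ^ m" using b b0 by simp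
    moreover have "1 \<le> real n" using assms by simp
    ultimately show ?thesis by (metis mult_1 mult_right_mono)
  qed
  finally have "Pfun m n d1 d2 k p \<le> Pfun m n (d-1) d (d-1) p" using e1 e2 by simp
  thus ?thesis by (intro bexI[of _ "d-1"]) auto
next
  case False
  define j where "j = d2 - k"
  define w where "w = d - j"
  have j1: "j \<ge> 1" and jk: "k + j = d2" using False c unfolding j_def by auto
  have wj: "w + j = d" "k \<le> w" using c jk unfolding w_def by auto
  have wd: "w \<in> {0..d-1}" using j1 wj by auto
  have "d1 + d2 - k = d1 + j" using jk by simp
  hence e1: "p ^ (d1 + d2 - k) = p ^ d1 * p ^ j" by (simp add: power_add)
  have e2: "p ^ d2 = p ^ k * p ^ j" using jk power_add[of p k j] by simp
  have e3: "p ^ d = p ^ w * p ^ j" using wj power_add[of p w j] by simp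
  have "d + d - w = d + j" using wj by simp
  hence e4: "p ^ (d + d - w) = p ^ w * p ^ j * p ^ j" using e3 by (simp add: power_add)
  have e5: "w + d - w = d" by simp
  have nj: "d2 - k = j" "d - w = j" using wj unfolding j_def by auto
  have P0: "Pfun m n d1 d2 k p = real n ^ j * (1 - p^k * p^j - p^d1 + 2 * p^d1 * p^j) ^ m"
    unfolding Pfun_def nj e1 e2 by (simp add: mult.assoc)
  have PA: "Pfun m n d d w p = real n ^ j * (1 - 2 * (p^w * p^j) + 2 * ((p^w * p^j) * p^j)) ^ m"
    unfolding Pfun_def nj e4 e3 by (simp add: algebra_simps)
  have PB: "Pfun m n w d w p = real n ^ j * (1 - p^w * p^j - p^w + 2 * (p^w * p^j)) ^ m"
    unfolding Pfun_def nj e5 by (simp add: e3)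
  have y: "0 \<le> p ^ j" "p ^ j \<le> 1" using assms by (auto intro: power_le_one)
  have za: "p ^ w \<le> p ^ k" using wj assms by (intro power_decreasing) auto
  have xz: "p ^ w * p ^ j \<le> p ^ d1" using c assms e3[symmetric] by (auto intro: power_decreasing)
  have xa: "p ^ d1 \<le> p ^ k" using c assms by (intro power_decreasing) auto
  have z0: "0 \<le> p ^ w" using assms by simp
  have b0: "0 \<le> 1 - p^k * p^j - p^d1 + 2 * p^d1 * p^j"
    using base_nonneg[OF assms(3,4) c(3)] e1 e2 by simp
  have nn: "0 \<le> real n ^ j" by simp
  have mono: "real n ^ j * u ^ m \<le> real n ^ j * v ^ m" if "u \<le> v" "0 \<le> u" for u v :: real
    using that nn by (intro mult_left_mono power_mono) auto
  from lin_bound[OF y za xz xa z0]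
  have "Pfun m n d1 d2 k p \<le> Pfun m n d d w p \<or> Pfun m n d1 d2 k p \<le> Pfun m n w d w p"
    unfolding P0 PA PB using mono[OF _ b0] by blast
  thus ?thesis using wd by (intro bexI[of _ w]) auto
qed

theorem lemma2:
  fixes n d m :: nat and p :: real
  assumes "n \<ge> 1" and "d \<ge> 1" and "m \<ge> 1" and "0 < p" and "p < 1"
  shows "Max {Pfun m n d1 d2 k p | d1 d2 k. d1 \<le> d \<and> d2 \<le> d \<and> k \<le> min d1 d2
                \<and> \<not> (d1 = d2 \<and> d2 = k)}
           = Max ((\<lambda>w. max (Pfun m n d d w p) (Pfun m n w d w p)) ` {0..d-1})
       \<and> Max ((\<lambda>w. max (Pfun m n d d w p) (Pfun m n w d w p)) ` {0..d-1})
           = Max ((\<lambda>w. max (real n ^ (d - w) * (1 - 2 * p ^ d + 2 * p ^ (2 * d - w)) ^ m)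
                            (real n ^ (d - w) * (1 + p ^ d - p ^ w) ^ m)) ` {0..d-1})"
proof
  define S where "S = {Pfun m n d1 d2 k p | d1 d2 k. d1 \<le> d \<and> d2 \<le> d \<and> k \<le> min d1 d2
                \<and> \<not> (d1 = d2 \<and> d2 = k)}"
  define f where "f = (\<lambda>w. max (Pfun m n d d w p) (Pfun m n w d w p))"
  have Ssub: "S \<subseteq> (\<lambda>(a,b,c). Pfun m n a b c p) ` ({..d} \<times> {..d} \<times> {..d})"
  proof
    fix x assume "x \<in> S"
    then obtain d1 d2 k where x: "x = Pfun m n d1 d2 k p" "d1 \<le> d" "d2 \<le> d" "k \<le> min d1 d2"
      unfolding S_def by blast
    hence "(d1, d2, k) \<in> {..d} \<times> {..d} \<times> {..d}" by auto
    thus "x \<in> (\<lambda>(a,b,c). Pfun m n a b c p) ` ({..d} \<times> {..d} \<times> {..d})"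
      using x(1) by (intro image_eqI[of _ _ "(d1,d2,k)"]) auto
  qed
  have fS: "finite S" by (rule finite_subset[OF Ssub]) auto
  have inS: "Pfun m n d d w p \<in> S" "Pfun m n w d w p \<in> S" if "w \<in> {0..d-1}" for w
    unfolding S_def using that assms by (fastforce, fastforce)
  have Sne: "S \<noteq> {}" using inS[of 0] by auto
  have fT: "finite (f ` {0..d-1})" by simp
  have Tne: "f ` {0..d-1} \<noteq> {}" by simp
  have le1: "Max S \<le> Max (f ` {0..d-1})"
  proof (rule Max.boundedI[OF fS Sne])
    fix x assume "x \<in> S"
    then obtain d1 d2 k where x: "x = Pfun m n d1 d2 k p" "d1 \<le> d" "d2 \<le> d" "k \<le> min d1 d2"
      "\<not> (d1 = d2 \<and> d2 = k)" unfolding S_def by blast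
    obtain w where w: "w \<in> {0..d-1}" "x \<le> f w"
      using key[OF assms(1,2,4,5) x(2-5), of m] x(1) unfolding f_def by blast
    have "f w \<le> Max (f ` {0..d-1})" using w(1) fT by (intro Max_ge) auto
    thus "x \<le> Max (f ` {0..d-1})" using w(2) by linarith
  qed
  have le2: "Max (f ` {0..d-1}) \<le> Max S"
  proof -
    obtain w where w: "w \<in> {0..d-1}" "Max (f ` {0..d-1}) = f w"
      using Max_in[OF fT Tne] by blast
    have "Pfun m n d d w p \<le> Max S" "Pfun m n w d w p \<le> Max S"
      using inS[OF w(1)] fS by (auto intro: Max_ge)
    thus ?thesis using w(2) unfolding f_def by simp
  qed
  show "Max S = Max (f ` {0..d-1})" by (rule antisym[OF le1 le2])
next
  have "\<And>w. w \<in> {0..d-1} \<Longrightarrow> max (Pfun m n d d w p) (Pfun m n w d w p) =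
     max (real n ^ (d - w) * (1 - 2 * p ^ d + 2 * p ^ (2 * d - w)) ^ m)
                            (real n ^ (d - w) * (1 + p ^ d - p ^ w) ^ m)"
  proof -
    fix w assume "w \<in> {0..d-1}"
    hence "w \<le> d" by auto
    hence q1: "d + d - w = 2 * d - w" and q2: "w + d - w = d" by auto
    have q3: "1 - p ^ d - p ^ w + 2 * p ^ d = 1 + p ^ d - p ^ w" by simp
    have q4: "1 - p ^ d - p ^ d = 1 - 2 * p ^ d" by simp
    show "?thesis w" unfolding Pfun_def q1 q2 q3 q4 by (rule refl)
  qed
  thus "Max ((\<lambda>w. max (Pfun m n d d w p) (Pfun m n w d w p)) ` {0..d-1})
           = Max ((\<lambda>w. max (real n ^ (d - w) * (1 - 2 * p ^ d + 2 * p ^ (2 * d - w)) ^ m)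
                            (real n ^ (d - w) * (1 + p ^ d - p ^ w) ^ m)) ` {0..d-1})"
    by (metis (no_types, lifting) image_cong)
qed

end
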